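(* Let $n\ge2$ and $\alpha\in\mathbb{R}\setminus\pi\mathbb{Z}$. Then, as power series in $z$ (convergent for $|z|$ small), $$F_n(z,\alpha):=\sum_{m=0}^\infty\sum_{k=0}^{n-1}\cot^m\frac{\alpha+k\pi}{n}\,z^m=\frac{n}{1+z^2}\Big(1-z\cot(n\arctan z-\alpha)\Big).$$ More generally, for $x\in\mathbb{C}$, $$M_{xJ_n+B_n}(z)=\frac{n}{1+z^2}\left(1+z\,\frac{x+\tan(n\arctan z)}{1-x\tan(n\arctan z)}\right).$$
   Context: $J_n$ is the $n\times n$ all-ones matrix, and $B_n=i\,M$ where $M$ is the $n\times n$ matrix with zero diagonal, entries $1$ above and $-1$ below the diagonal. For an $n\times n$ matrix $C$, $M_C(z)=\operatorname{Tr}\big((I-zC)^{-1}\big)=\sum_{m\ge0}\operatorname{Tr}(C^m)z^m$ (moment generating function with respect to the non-normalized trace). In $F_n$ the $m=0$ term equals $n$. *)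

theory Defs
  imports "HOL-Analysis.Analysis" "Jordan_Normal_Form.Matrix"
begin

definition mat_trace :: "complex mat \<Rightarrow> complex" where
  "mat_trace A = (\<Sum>i<dim_row A. A $$ (i, i))"

definition J_mat :: "nat \<Rightarrow> complex mat" where
  "J_mat n = mat n n (\<lambda>_. 1)"

definition B_mat :: "nat \<Rightarrow> complex mat" where
  "B_mat n = mat n n (\<lambda>(i, j). \<i> * (if i < j then 1 else if j < i then -1 else 0))"

text \<open>Coefficients of the moment generating function M_C(z) = sum_m Tr(C^m) z^m.\<close>
definition moment_coeff :: "complex mat \<Rightarrow> nat \<Rightarrow> complex" where
  "moment_coeff C m = mat_trace (C ^\<^sub>m m)"

definition F_coeff :: "nat \<Rightarrow> real \<Rightarrow> nat \<Rightarrow> real" where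
  "F_coeff n \<alpha> m = (\<Sum>k<n. cot ((\<alpha> + real k * pi) / real n) ^ m)"

end

theory Submission
  imports Defs
begin

lemma root_pow_sum:
  fixes \<zeta> E0 :: complex
  assumes "\<zeta>^n = 1" "\<forall>j. 0<j \<and> j<n \<longrightarrow> \<zeta>^j \<noteq> 1" "i < n"
  shows "(\<Sum>k<n. (E0*\<zeta>^k)^i) = (if i = 0 then of_nat n else 0)"
proof (cases "i = 0")
  case True then show ?thesis by simp
next
  case False
  have ne: "\<zeta>^i \<noteq> 1" using assms False by auto
  have "(\<Sum>k<n. (E0*\<zeta>^k)^i) = E0^i * (\<Sum>k<n. (\<zeta>^i)^k)"
    by (simp add: sum_distrib_left power_mult_distrib power_mult[symmetric] mult.commute)
  also have "(\<Sum>k<n. (\<zeta>^i)^k) = 0"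
  proof -
    have "(\<zeta>^i)^n = 1" by (metis assms(1) power_mult mult.commute power_one)
    then show ?thesis using ne by (simp add: geometric_sum)
  qed
  finally show ?thesis using False by simp
qed

lemma root_frac_sum:
  fixes \<zeta> E0 b \<sigma> :: complex
  assumes "\<zeta>^n = 1" "\<forall>j. 0<j \<and> j<n \<longrightarrow> \<zeta>^j \<noteq> 1" "n \<ge> 1" "E0^n = \<sigma>" "b^n \<noteq> \<sigma>"
  shows "(\<Sum>k<n. 1/(E0*\<zeta>^k - b)) = of_nat n * b^(n-1) / (\<sigma> - b^n)"
proof -
  have trm: "1/(E0*\<zeta>^k - b) = (\<Sum>i<n. b^(n - Suc i) * (E0*\<zeta>^k)^i) / (\<sigma> - b^n)" for k
  proof -
    let ?E = "E0*\<zeta>^k"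
    have En: "?E^n = \<sigma>" using assms by (simp add: power_mult_distrib power_mult[symmetric] mult.commute[of k] power_mult)
    have d: "?E^n - b^n = (?E - b) * (\<Sum>i<n. b^(n - Suc i) * ?E^i)" by (rule power_diff_sumr2)
    have "?E - b \<noteq> 0" using En assms(5) by auto
    moreover have "\<sigma> - b^n \<noteq> 0" using assms(5) by auto
    ultimately have "\<sigma> - b^n = (?E - b) * (\<Sum>i<n. b^(n - Suc i) * ?E^i)" "?E - b \<noteq> 0" "\<sigma> - b^n \<noteq> 0"
      using d En by auto
    then show ?thesis by (metis (no_types, lifting) nonzero_mult_div_cancel_left div_by_1 divide_divide_eq_right)
  qed
  have "(\<Sum>k<n. 1/(E0*\<zeta>^k - b)) = (\<Sum>i<n. b^(n - Suc i) * (\<Sum>k<n. (E0*\<zeta>^k)^i)) / (\<sigma> - b^n)"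
  proof -
    have "(\<Sum>k<n. 1/(E0*\<zeta>^k - b)) = (\<Sum>k<n. \<Sum>i<n. b^(n - Suc i) * (E0*\<zeta>^k)^i) / (\<sigma> - b^n)"
      by (simp add: trm sum_divide_distrib[symmetric])
    also have "(\<Sum>k<n. \<Sum>i<n. b^(n - Suc i) * (E0*\<zeta>^k)^i) = (\<Sum>i<n. \<Sum>k<n. b^(n - Suc i) * (E0*\<zeta>^k)^i)"
      by (rule sum.swap)
    finally show ?thesis by (simp add: sum_distrib_left)
  qed
  also have "(\<Sum>i<n. b^(n - Suc i) * (\<Sum>k<n. (E0*\<zeta>^k)^i)) = (\<Sum>i<n. b^(n - Suc i) * (if i = 0 then of_nat n else 0))"
    using root_pow_sum[OF assms(1,2)] by (intro sum.cong) auto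
  also have "\<dots> = b^(n-1) * of_nat n" proof -
    have "(\<Sum>i<n. b^(n - Suc i) * (if i = 0 then of_nat n else 0)) = (\<Sum>i<n. if i = 0 then b^(n-1) * of_nat n else (0::complex))"
      by (rule sum.cong) auto
    also have "\<dots> = b^(n-1) * of_nat n" using assms(3) by (subst sum.delta) auto
    finally show ?thesis .
  qed
  finally show ?thesis by (simp only: mult.commute)
qed

lemma one_term:
  fixes E a z :: complex
  assumes "E \<noteq> 1" "E \<noteq> a" "1 - \<i>*z \<noteq> 0" "a = (1 + \<i>*z)/(1 - \<i>*z)"
  shows "1/(1 - z * (\<i>*(E+1)/(E-1))) = 1/(1 - \<i>*z) * (1 + (a - 1)/(E - a))"
proof -
  have e1: "E - 1 \<noteq> 0" and e2: "E - a \<noteq> 0" using assms by auto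
  have "1 - z * (\<i>*(E+1)/(E-1)) = (1 - \<i>*z) * (E - a) / (E - 1)"
    using e1 assms(3,4) by (simp add: field_simps)
  moreover have "1 + (a - 1)/(E - a) = (E - 1)/(E - a)" using e2 by (simp add: field_simps)
  ultimately show ?thesis using e1 e2 assms(3) by simp
qed

lemma cot_sum:
  fixes \<zeta> E0 \<sigma> z :: complex
  assumes "\<zeta>^n = 1" "\<forall>j. 0<j \<and> j<n \<longrightarrow> \<zeta>^j \<noteq> 1" "n \<ge> 1" "E0^n = \<sigma>" "\<sigma> \<noteq> 1"
    "1 - \<i>*z \<noteq> 0" "1 + \<i>*z \<noteq> 0" "((1 + \<i>*z)/(1 - \<i>*z))^n \<noteq> \<sigma>"
  shows "(\<Sum>k<n. 1/(1 - z * (\<i>*(E0*\<zeta>^k+1)/(E0*\<zeta>^k-1)))) =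
    of_nat n / (1 + z^2) * (1 - \<i>*z*(((1 + \<i>*z)/(1 - \<i>*z))^n + \<sigma>)/(((1 + \<i>*z)/(1 - \<i>*z))^n - \<sigma>))"
proof -
  define a where "a = (1 + \<i>*z)/(1 - \<i>*z)"
  have Epow: "(E0*\<zeta>^k)^n = \<sigma>" for k
    using assms by (simp add: power_mult_distrib power_mult[symmetric] mult.commute[of k] power_mult)
  have "(\<Sum>k<n. 1/(1 - z * (\<i>*(E0*\<zeta>^k+1)/(E0*\<zeta>^k-1)))) = (\<Sum>k<n. 1/(1 - \<i>*z) * (1 + (a - 1)/(E0*\<zeta>^k - a)))"
  proof (rule sum.cong[OF refl])
    fix k
    show "1/(1 - z * (\<i>*(E0*\<zeta>^k+1)/(E0*\<zeta>^k-1))) = 1/(1 - \<i>*z) * (1 + (a - 1)/(E0*\<zeta>^k - a))"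
      apply (rule one_term)
      using Epow[of k] assms(5,6,8) a_def by auto
  qed
  also have "\<dots> = 1/(1 - \<i>*z) * (of_nat n + (a - 1) * (\<Sum>k<n. 1/(E0*\<zeta>^k - a)))"
    by (simp add: sum_distrib_left[symmetric] sum.distrib sum_divide_distrib[symmetric] sum_distrib_left)
  also have "(\<Sum>k<n. 1/(E0*\<zeta>^k - a)) = of_nat n * a^(n-1) / (\<sigma> - a^n)"
    by (rule root_frac_sum) (use assms a_def in auto)
  finally have S: "(\<Sum>k<n. 1/(1 - z * (\<i>*(E0*\<zeta>^k+1)/(E0*\<zeta>^k-1)))) = 
      1/(1 - \<i>*z) * (of_nat n + (a - 1) * (of_nat n * a^(n-1) / (\<sigma> - a^n)))" .
  define P where "P = a^(n-1)"
  have An: "a^n = a * P" unfolding P_def using assms(3) by (metis One_nat_def Suc_pred less_eq_Suc_le power_Suc)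
  have z2: "1 + z^2 = (1 - \<i>*z) * (1 + \<i>*z)" by (simp add: algebra_simps power2_eq_square)
  have nz: "a*P - \<sigma> \<noteq> 0" "\<sigma> - a*P \<noteq> 0" using assms(8) An a_def by auto
  have au: "a * (1 - \<i>*z) = 1 + \<i>*z" unfolding a_def using assms(6) by simp
  have L: "1/(1 - \<i>*z) * (of_nat n + (a - 1) * (of_nat n * P / (\<sigma> - a*P))) = of_nat n * (\<sigma> - P) / ((1 - \<i>*z) * (\<sigma> - a*P))"
    using nz assms(6) by (simp add: field_simps)
  have num: "(a*P - \<sigma> - \<i>*z*(a*P+\<sigma>)) = (1 + \<i>*z) * (P - \<sigma>)"
  proof -
    have "(a*P - \<sigma> - \<i>*z*(a*P+\<sigma>)) - (1 + \<i>*z) * (P - \<sigma>) = (a * (1 - \<i>*z) - (1 + \<i>*z)) * P"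
      by (simp add: algebra_simps)
    then show ?thesis using au by simp
  qed
  have R: "of_nat n / ((1 - \<i>*z) * (1 + \<i>*z)) * (1 - \<i>*z*(a*P+\<sigma>)/(a*P-\<sigma>)) = of_nat n * (\<sigma> - P) / ((1 - \<i>*z) * (\<sigma> - a*P))"
  proof -
    have "1 - \<i>*z*(a*P+\<sigma>)/(a*P-\<sigma>) = (a*P - \<sigma> - \<i>*z*(a*P+\<sigma>))/(a*P-\<sigma>)"
      using nz by (simp add: field_simps)
    also have "\<dots> = (1 + \<i>*z) * (\<sigma> - P) / (\<sigma> - a*P)" unfolding num using nz
      by (simp add: field_simps)
    finally have "1 - \<i>*z*(a*P+\<sigma>)/(a*P-\<sigma>) = (1 + \<i>*z) * (\<sigma> - P) / (\<sigma> - a*P)" .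
    moreover have "\<And>p1 p2 p3 p4 p5::complex. p2 \<noteq> 0 \<Longrightarrow> p5/(p1*p2) * (p2*p3/p4) = p5*p3/(p1*p4)" by simp
    ultimately show ?thesis using assms(7) by simp
  qed
  show ?thesis unfolding S a_def[symmetric] An z2 P_def[symmetric] L R ..
qed

lemma mult_entry:
  fixes A B :: "complex mat"
  assumes "A \<in> carrier_mat n n" "B \<in> carrier_mat n n" "l < n" "j < n"
  shows "(A * B) $$ (l,j) = (\<Sum>i<n. A $$ (l,i) * B $$ (i,j))"
  using assms by (simp add: scalar_prod_def atLeast0LessThan)

lemma trace_eig:
  fixes C :: "complex mat" and V W :: "nat \<Rightarrow> nat \<Rightarrow> complex" and lam :: "nat \<Rightarrow> complex"
  assumes C: "C \<in> carrier_mat n n"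
    and eig: "\<forall>k<n. \<forall>l<n. (\<Sum>j<n. C $$ (l,j) * V j k) = lam k * V l k"
    and VW: "\<forall>j<n. \<forall>l<n. (\<Sum>k<n. V j k * W k l) = (if j = l then 1 else 0)"
    and WV: "\<forall>k<n. (\<Sum>l<n. W k l * V l k) = 1"
  shows "mat_trace (C ^\<^sub>m m) = (\<Sum>k<n. lam k ^ m)"
proof -
  have step: "\<forall>k<n. \<forall>l<n. (\<Sum>j<n. (C ^\<^sub>m m) $$ (l,j) * V j k) = lam k ^ m * V l k"
  proof (induction m)
    case 0
    have "dim_row C = n" using C by simp
    then show ?case
      apply (intro allI impI)
      apply (subst sum.cong[OF refl, where h="\<lambda>j. if j = l then V l k else 0" for l k])
      by auto
  next
    case (Suc m)
    show ?case
    proof (intro allI impI)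
      fix k l assume k: "k < n" and l: "l < n"
      have Cm: "C ^\<^sub>m m \<in> carrier_mat n n" using C by simp
      have "(\<Sum>j<n. (C ^\<^sub>m Suc m) $$ (l,j) * V j k) = (\<Sum>j<n. (\<Sum>i<n. (C ^\<^sub>m m) $$ (l,i) * C $$ (i,j)) * V j k)"
        using mult_entry[OF Cm C l] by simp
      also have "\<dots> = (\<Sum>i<n. (C ^\<^sub>m m) $$ (l,i) * (\<Sum>j<n. C $$ (i,j) * V j k))"
      proof -
        have "(\<Sum>j<n. (\<Sum>i<n. (C ^\<^sub>m m) $$ (l,i) * C $$ (i,j)) * V j k) = (\<Sum>j<n. \<Sum>i<n. (C ^\<^sub>m m) $$ (l,i) * (C $$ (i,j) * V j k))"
          by (simp add: sum_distrib_right mult.assoc)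
        also have "\<dots> = (\<Sum>i<n. \<Sum>j<n. (C ^\<^sub>m m) $$ (l,i) * (C $$ (i,j) * V j k))" by (rule sum.swap)
        finally show ?thesis by (simp add: sum_distrib_left)
      qed
      also have "\<dots> = (\<Sum>i<n. (C ^\<^sub>m m) $$ (l,i) * (lam k * V i k))"
        using eig k by simp
      also have "\<dots> = lam k * (\<Sum>i<n. (C ^\<^sub>m m) $$ (l,i) * V i k)"
        by (simp add: sum_distrib_left mult.assoc mult.left_commute)
      also have "\<dots> = lam k ^ Suc m * V l k" using Suc k l by simp
      finally show "(\<Sum>j<n. (C ^\<^sub>m Suc m) $$ (l,j) * V j k) = lam k ^ Suc m * V l k" .
    qed
  qed
  have "mat_trace (C ^\<^sub>m m) = (\<Sum>l<n. (C ^\<^sub>m m) $$ (l,l))"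
    unfolding mat_trace_def using C by simp
  also have "\<dots> = (\<Sum>l<n. \<Sum>j<n. (C ^\<^sub>m m) $$ (l,j) * (\<Sum>k<n. V j k * W k l))"
  proof (rule sum.cong[OF refl])
    fix l assume l: "l \<in> {..<n}"
    have "(\<Sum>j<n. (C ^\<^sub>m m) $$ (l,j) * (\<Sum>k<n. V j k * W k l)) = (\<Sum>j<n. if j = l then (C ^\<^sub>m m) $$ (l,l) else 0)"
      using VW l by (intro sum.cong refl) auto
    also have "\<dots> = (C ^\<^sub>m m) $$ (l,l)" using l by (subst sum.delta) auto
    finally show "(C ^\<^sub>m m) $$ (l,l) = (\<Sum>j<n. (C ^\<^sub>m m) $$ (l,j) * (\<Sum>k<n. V j k * W k l))" by simp
  qed
  also have "\<dots> = (\<Sum>k<n. \<Sum>l<n. W k l * (\<Sum>j<n. (C ^\<^sub>m m) $$ (l,j) * V j k))"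
  proof -
    have "(\<Sum>l<n. \<Sum>j<n. (C ^\<^sub>m m) $$ (l,j) * (\<Sum>k<n. V j k * W k l)) = (\<Sum>l<n. \<Sum>j<n. \<Sum>k<n. (C ^\<^sub>m m) $$ (l,j) * V j k * W k l)"
      by (simp add: sum_distrib_left mult.assoc)
    also have "\<dots> = (\<Sum>l<n. \<Sum>k<n. \<Sum>j<n. (C ^\<^sub>m m) $$ (l,j) * V j k * W k l)"
      by (rule sum.cong[OF refl], rule sum.swap)
    also have "\<dots> = (\<Sum>k<n. \<Sum>l<n. \<Sum>j<n. (C ^\<^sub>m m) $$ (l,j) * V j k * W k l)"
      by (rule sum.swap)
    also have "\<dots> = (\<Sum>k<n. \<Sum>l<n. W k l * (\<Sum>j<n. (C ^\<^sub>m m) $$ (l,j) * V j k))"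
      by (simp add: sum_distrib_left sum_distrib_right mult.commute)
    finally show ?thesis .
  qed
  also have "\<dots> = (\<Sum>k<n. \<Sum>l<n. W k l * (lam k ^ m * V l k))"
    using step by (intro sum.cong refl) simp
  also have "\<dots> = (\<Sum>k<n. lam k ^ m * (\<Sum>l<n. W k l * V l k))"
    by (simp add: sum_distrib_left mult.left_commute)
  also have "\<dots> = (\<Sum>k<n. lam k ^ m)" using WV by simp
  finally show ?thesis .
qed

definition zeta :: "nat \<Rightarrow> complex" where "zeta n = exp (2 * pi * \<i> / of_nat n)"

lemma zeta_pow_n: "n \<ge> 1 \<Longrightarrow> zeta n ^ n = 1"
  unfolding zeta_def by (simp add: exp_of_nat_mult[symmetric])

lemma zeta_pow: "zeta n ^ j = exp (of_nat j * (2 * pi * \<i> / of_nat n))"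
  unfolding zeta_def by (rule exp_of_nat_mult[symmetric])

lemma zeta_ne1: assumes "0 < j" "j < n" shows "zeta n ^ j \<noteq> 1"
proof
  assume "zeta n ^ j = 1"
  then obtain m :: int where m: "Im (of_nat j * (2 * pi * \<i> / of_nat n)) = of_int (2*m) * pi"
    unfolding zeta_pow exp_eq_1 by blast
  have "Im (of_nat j * (2 * pi * \<i> / of_nat n)) = 2 * pi * real j / real n"
    by (simp add: Im_divide power2_eq_square)
  with m have "real j / real n = real_of_int m" using assms by (simp add: field_simps)
  then have "real j = real_of_int m * real n" using assms by (simp add: field_simps)
  then have "int j = m * int n" by (metis of_int_eq_iff of_int_mult of_int_of_nat_eq)
  then show False using assms
    by (metis (no_types, opaque_lifting) dvd_triv_right int_dvd_int_iff nat_dvd_not_less)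
qed

lemma zeta_inj: assumes "l < n" "j < n" "zeta n ^ l = zeta n ^ j" shows "l = j"
proof (rule ccontr)
  assume ne: "l \<noteq> j"
  have nz: "zeta n ^ i \<noteq> 0" for i unfolding zeta_pow by simp
  have nz0: "zeta n \<noteq> 0" unfolding zeta_def by simp
  show False
  proof (cases "l < j")
    case True
    have "zeta n ^ j = zeta n ^ l * zeta n ^ (j - l)" using True by (simp add: power_add[symmetric])
    then have "zeta n ^ (j - l) = 1" using assms(3) nz[of l] nz0 by simp
    then show False using zeta_ne1[of "j - l" n] True assms by simp
  next
    case False
    then have lt: "j < l" using ne by simp
    have "zeta n ^ l = zeta n ^ j * zeta n ^ (l - j)" using lt by (simp add: power_add[symmetric])
    then have "zeta n ^ (l - j) = 1" using assms(3) nz[of j] nz0 by simp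
    then show False using zeta_ne1[of "l - j" n] lt assms by simp
  qed
qed

lemma C_carrier: "x \<cdot>\<^sub>m J_mat n + B_mat n \<in> carrier_mat n n"
  unfolding J_mat_def B_mat_def by auto

lemma C_entry: "l < n \<Longrightarrow> j < n \<Longrightarrow>
  (x \<cdot>\<^sub>m J_mat n + B_mat n) $$ (l,j) = x + \<i> * (if l < j then 1 else if j < l then -1 else 0)"
  unfolding J_mat_def B_mat_def by simp

lemma sign_split: "l < n \<Longrightarrow> (\<Sum>j<n. (if l < j then 1 else if j < l then -1 else 0) * (w::complex)^j)
   = (\<Sum>j<n. w^j) - w^l - 2 * (\<Sum>j<l. w^j)"
proof -
  assume l: "l < n"
  have "(\<Sum>j<n. (if l < j then 1 else if j < l then -1 else 0) * w^j)
     = (\<Sum>j<n. w^j - (if j = l then w^l else 0) - 2 * (if j \<in> {..<l} then w^j else 0))"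
    by (intro sum.cong refl) auto
  also have "\<dots> = (\<Sum>j<n. w^j) - w^l - 2 * (\<Sum>j<n. if j \<in> {..<l} then w^j else 0)"
    using l by (simp add: sum_subtractf sum_distrib_left)
  also have "(\<Sum>j<n. if j \<in> {..<l} then w^j else 0) = (\<Sum>j\<in>{..<n} \<inter> {..<l}. w^j)"
    by (simp add: sum.inter_restrict)
  also have "{..<n} \<inter> {..<l} = {..<l}" using l by auto
  finally show ?thesis .
qed

lemma eigvec:
  fixes x w :: complex
  assumes "w^n * (x + \<i>) = x - \<i>" "w \<noteq> 1" "l < n"
  shows "(\<Sum>j<n. (x \<cdot>\<^sub>m J_mat n + B_mat n) $$ (l,j) * w^j) = (-\<i>*(w+1)/(w-1)) * w^l"
proof -
  have w1: "w - 1 \<noteq> 0" using assms by simp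
  have "(\<Sum>j<n. (x \<cdot>\<^sub>m J_mat n + B_mat n) $$ (l,j) * w^j)
      = (\<Sum>j<n. x * w^j + \<i> * ((if l < j then 1 else if j < l then -1 else 0) * w^j))"
    using assms(3) by (intro sum.cong refl) (simp add: C_entry algebra_simps)
  also have "\<dots> = x * (\<Sum>j<n. w^j) + \<i> * (\<Sum>j<n. (if l < j then 1 else if j < l then -1 else 0) * w^j)"
    by (simp add: sum.distrib sum_distrib_left)
  also have "\<dots> = x * ((w^n - 1)/(w - 1)) + \<i> * ((w^n - 1)/(w - 1) - w^l - 2 * ((w^l - 1)/(w - 1)))"
    using assms(3) w1 by (simp add: sign_split geometric_sum)
  also have "\<dots> = ((x + \<i>) * (w^n - 1) + 2 * \<i> - \<i> * w^l * (w + 1)) / (w - 1)"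
  proof -
    have gen: "\<And>W L d::complex. d \<noteq> 0 \<Longrightarrow> x*((W-1)/d) + \<i>*((W-1)/d - L - 2*((L-1)/d)) = ((x+\<i>)*(W-1) + 2*\<i> - \<i>*L*(d+2))/d"
      by (simp add: field_simps)
    have "w + 1 = (w - 1) + 2" by simp
    then show ?thesis using gen[OF w1, of "w^n" "w^l"] by simp
  qed
  also have "(x + \<i>) * (w^n - 1) + 2 * \<i> = 0"
    using assms(1) by (simp add: algebra_simps)
  finally show ?thesis using w1 by (simp add: field_simps)
qed

lemma pow_swap: "((a::'a::monoid_mult)^k)^l = (a^l)^k"
  by (simp add: power_mult[symmetric] mult.commute)

lemma sums_eig:
  fixes lam :: "nat \<Rightarrow> complex"
  assumes "\<forall>k<n. norm (lam k * z) < 1"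
  shows "(\<lambda>m. (\<Sum>k<n. lam k ^ m) * z ^ m) sums (\<Sum>k<n. 1 / (1 - z * lam k))"
proof -
  have "(\<lambda>m. \<Sum>k<n. (lam k * z) ^ m) sums (\<Sum>k<n. 1 / (1 - lam k * z))"
    by (rule sums_sum) (use assms geometric_sums in auto)
  moreover have "(\<lambda>m. \<Sum>k<n. (lam k * z) ^ m) = (\<lambda>m. (\<Sum>k<n. lam k ^ m) * z ^ m)"
    by (simp add: sum_distrib_right power_mult_distrib)
  moreover have "(\<Sum>k<n. 1 / (1 - lam k * z)) = (\<Sum>k<n. 1 / (1 - z * lam k))"
    by (simp add: mult.commute)
  ultimately show ?thesis by simp
qed

lemma moment_eig:
  fixes x E0 :: complex
  assumes n: "n \<ge> 1" and xi: "x \<noteq> \<i>" "x \<noteq> -\<i>" and E0: "E0^n = (x + \<i>)/(x - \<i>)"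
  shows "moment_coeff (x \<cdot>\<^sub>m J_mat n + B_mat n) m
     = (\<Sum>k<n. (\<i>*(E0*zeta n^k+1)/(E0*zeta n^k-1))^m)"
proof -
  define \<zeta> where "\<zeta> = zeta n"
  have \<zeta>n: "\<zeta>^n = 1" using zeta_pow_n n \<zeta>_def by simp
  have \<zeta>nz: "\<zeta> \<noteq> 0" unfolding \<zeta>_def zeta_def by simp
  have s0: "(x + \<i>)/(x - \<i>) \<noteq> 0" using xi by (auto simp add: add_eq_0_iff) (metis minus_minus)
  have s1: "(x + \<i>)/(x - \<i>) \<noteq> 1" using xi by simp
  have E0nz: "E0 \<noteq> 0"
  proof
    assume "E0 = 0" then have "E0^n = 0" using n by simp
    with E0 s0 show False by simp
  qed
  have Epow: "(E0*\<zeta>^k)^n = (x + \<i>)/(x - \<i>)" for k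
    using E0 \<zeta>n by (simp add: power_mult_distrib power_mult[symmetric] mult.commute[of k] power_mult)
  have Enz: "E0*\<zeta>^k \<noteq> 0" for k using E0nz \<zeta>nz by simp
  have Ene1: "E0*\<zeta>^k \<noteq> 1" for k using Epow[of k] s1 by auto
  show ?thesis
    unfolding moment_coeff_def \<zeta>_def[symmetric]
  proof (rule trace_eig[OF C_carrier, where V="\<lambda>j k. (inverse (E0*\<zeta>^k))^j" and W="\<lambda>k l. (E0*\<zeta>^k)^l / of_nat n"])
    show "\<forall>k<n. \<forall>l<n. (\<Sum>j<n. (x \<cdot>\<^sub>m J_mat n + B_mat n) $$ (l, j) * inverse (E0 * \<zeta> ^ k) ^ j) =
        \<i> * (E0 * \<zeta> ^ k + 1) / (E0 * \<zeta> ^ k - 1) * inverse (E0 * \<zeta> ^ k) ^ l"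
    proof (intro allI impI)
      fix k l assume k: "k < n" and l: "l < n"
      let ?E = "E0 * \<zeta> ^ k"
      have wn: "(inverse ?E)^n * (x + \<i>) = x - \<i>"
      proof -
        have xp: "x + \<i> \<noteq> 0" "x - \<i> \<noteq> 0" using s0 by auto
        have "(inverse ?E)^n = (x - \<i>)/(x + \<i>)" by (subst power_inverse, subst Epow[of k]) simp
        then show ?thesis using xp by simp
      qed
      have w1: "inverse ?E \<noteq> 1" using Ene1[of k] by (metis inverse_1 inverse_inverse_eq)
      have lam: "-\<i>*(inverse ?E+1)/(inverse ?E-1) = \<i> * (?E + 1) / (?E - 1)"
        using Enz[of k] Ene1[of k] by (simp add: field_simps)
      show "(\<Sum>j<n. (x \<cdot>\<^sub>m J_mat n + B_mat n) $$ (l, j) * inverse ?E ^ j) = \<i> * (?E + 1) / (?E - 1) * inverse ?E ^ l"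
        by (subst lam[symmetric]) (rule eigvec[OF wn w1 l])
    qed
  next
    show "\<forall>j<n. \<forall>l<n. (\<Sum>k<n. inverse (E0 * \<zeta> ^ k) ^ j * ((E0 * \<zeta> ^ k) ^ l / of_nat n)) = (if j = l then 1 else 0)"
    proof (intro allI impI)
      fix j l assume j: "j < n" and l: "l < n"
      have eq: "inverse (E0 * \<zeta> ^ k) ^ j * ((E0 * \<zeta> ^ k) ^ l / of_nat n) = (E0^l / E0^j / of_nat n) * (\<zeta>^l / \<zeta>^j)^k" for k
      proof -
        have a: "(E0 * \<zeta> ^ k) ^ l = E0^l * (\<zeta>^l)^k" by (simp add: power_mult_distrib pow_swap)
        have b: "inverse (E0 * \<zeta> ^ k) ^ j = inverse (E0^j * (\<zeta>^j)^k)" by (simp add: power_inverse power_mult_distrib pow_swap)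
        have c: "(\<zeta>^l / \<zeta>^j)^k = (\<zeta>^l)^k / (\<zeta>^j)^k" by (rule power_divide)
        show ?thesis unfolding a b c using E0nz \<zeta>nz by (simp add: field_simps)
      qed
      show "(\<Sum>k<n. inverse (E0 * \<zeta> ^ k) ^ j * ((E0 * \<zeta> ^ k) ^ l / of_nat n)) = (if j = l then 1 else 0)"
      proof (cases "j = l")
        case True
        then show ?thesis unfolding eq using E0nz \<zeta>nz n by simp
      next
        case False
        have q1: "\<zeta>^l / \<zeta>^j \<noteq> 1" using zeta_inj[OF l j] False \<zeta>nz \<zeta>_def by auto
        have qn: "(\<zeta>^l / \<zeta>^j)^n = 1"
          by (simp add: power_divide power_mult[symmetric] mult.commute[of _ n] power_mult \<zeta>n)
        have "(\<Sum>k<n. (\<zeta>^l / \<zeta>^j)^k) = 0" using q1 qn by (simp add: geometric_sum)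
        then have "(\<Sum>k<n. (E0^l / E0^j / of_nat n) * (\<zeta>^l / \<zeta>^j)^k) = 0"
          by (simp only: sum_distrib_left[symmetric]) simp
        then show ?thesis unfolding eq using False by simp
      qed
    qed
  next
    show "\<forall>k<n. (\<Sum>l<n. (E0 * \<zeta> ^ k) ^ l / of_nat n * inverse (E0 * \<zeta> ^ k) ^ l) = 1"
      using Enz n \<zeta>nz by (simp add: power_inverse[symmetric] field_simps)
  qed
qed

lemma tri_trace:
  fixes C :: "complex mat" and R :: "nat \<Rightarrow> nat \<Rightarrow> bool"
  assumes C: "C \<in> carrier_mat n n"
    and irr: "\<And>a. \<not> R a a" and tri: "\<And>a b. a \<noteq> b \<Longrightarrow> R a b \<or> R b a"
    and tr: "\<And>a b c. R a b \<Longrightarrow> R b c \<Longrightarrow> R a c"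
    and z: "\<And>l j. l < n \<Longrightarrow> j < n \<Longrightarrow> R l j \<Longrightarrow> C $$ (l,j) = 0"
    and d: "\<And>l. l < n \<Longrightarrow> C $$ (l,l) = d"
  shows "mat_trace (C ^\<^sub>m m) = of_nat n * d ^ m"
proof -
  have "(\<forall>l<n. \<forall>j<n. R l j \<longrightarrow> (C ^\<^sub>m m) $$ (l,j) = 0) \<and> (\<forall>l<n. (C ^\<^sub>m m) $$ (l,l) = d^m)"
  proof (induction m)
    case 0
    have "dim_row C = n" using C by simp
    then show ?case using irr by auto
  next
    case (Suc m)
    have Cm: "C ^\<^sub>m m \<in> carrier_mat n n" using C by simp
    have A: "(C ^\<^sub>m Suc m) $$ (l,j) = (\<Sum>i<n. (C ^\<^sub>m m) $$ (l,i) * C $$ (i,j))" if "l < n" "j < n" for l j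
      using mult_entry[OF Cm C that] by simp
    show ?case
    proof (intro conjI allI impI)
      fix l j assume l: "l < n" and j: "j < n" and r: "R l j"
      have "(\<Sum>i<n. (C ^\<^sub>m m) $$ (l,i) * C $$ (i,j)) = 0"
      proof (rule sum.neutral, intro ballI)
        fix i assume i: "i \<in> {..<n}"
        show "(C ^\<^sub>m m) $$ (l,i) * C $$ (i,j) = 0"
        proof (cases "R l i")
          case True then show ?thesis using Suc l i by auto
        next
          case False
          then have "i = l \<or> R i l" using tri by blast
          then have "R i j" using r tr by blast
          then show ?thesis using z i j by auto
        qed
      qed
      then show "(C ^\<^sub>m Suc m) $$ (l,j) = 0" using A l j by simp
    next
      fix l assume l: "l < n"
      have "(\<Sum>i<n. (C ^\<^sub>m m) $$ (l,i) * C $$ (i,l)) = (\<Sum>i<n. if i = l then d^m * d else 0)"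
      proof (rule sum.cong[OF refl])
        fix i assume i: "i \<in> {..<n}"
        show "(C ^\<^sub>m m) $$ (l,i) * C $$ (i,l) = (if i = l then d^m * d else 0)"
        proof (cases "i = l")
          case True then show ?thesis using Suc d l by simp
        next
          case False
          then have "R l i \<or> R i l" using tri by blast
          then show ?thesis using Suc z l i False by auto
        qed
      qed
      also have "\<dots> = d ^ Suc m" using l by (simp add: sum.delta mult.commute)
      finally show "(C ^\<^sub>m Suc m) $$ (l,l) = d ^ Suc m" using A l by simp
    qed
  qed
  then have "\<forall>l<n. (C ^\<^sub>m m) $$ (l,l) = d^m" by blast
  then show ?thesis unfolding mat_trace_def using C by simp
qed

lemma moment_i: "moment_coeff (\<i> \<cdot>\<^sub>m J_mat n + B_mat n) m = of_nat n * \<i> ^ m"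
  unfolding moment_coeff_def
  by (rule tri_trace[OF C_carrier, where R="\<lambda>l j. j < l"]) (auto simp: C_entry)

lemma moment_mi: "moment_coeff ((-\<i>) \<cdot>\<^sub>m J_mat n + B_mat n) m = of_nat n * (-\<i>) ^ m"
  unfolding moment_coeff_def
  by (rule tri_trace[OF C_carrier, where R="\<lambda>l j. l < j"]) (auto simp: C_entry)

lemma exp2: "exp (2 * \<i> * (u::complex)) = exp (\<i> * u) ^ 2"
  by (simp add: exp_of_nat_mult[symmetric] mult.assoc)

lemma div_i: "(X::complex) / (\<i> * Y) = -\<i> * X / Y"
  by (cases "Y = 0") (simp_all add: field_simps)

lemma div_gen:
  fixes z c P Q d :: complex
  assumes "c \<noteq> 0" "d \<noteq> 0" "Q \<noteq> 0"
  shows "z * (c * P / d) / (\<i> * c * Q / d) = - (\<i> * z * P / Q)"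
proof -
  have "z * (c * P / d) / (\<i> * c * Q / d) = (z * P) / (\<i> * Q)" using assms by (simp add: field_simps)
  also have "\<dots> = - (\<i> * z * P / Q)" by (simp add: div_i)
  finally show ?thesis .
qed

lemma tan_exp:
  fixes u :: complex
  assumes "exp (2 * \<i> * u) + 1 \<noteq> 0"
  shows "tan u = -\<i> * (exp (2 * \<i> * u) - 1) / (exp (2 * \<i> * u) + 1)"
proof -
  define e where "e = exp (\<i> * u)"
  have e0: "e \<noteq> 0" unfolding e_def by simp
  have em: "exp (-(\<i> * u)) = inverse e" unfolding e_def by (simp add: exp_minus)
  have a: "e^2 + 1 \<noteq> 0" using assms unfolding exp2 e_def .
  have "sin u / cos u = (e - inverse e) / (2*\<i>) / ((e + inverse e) / 2)"
    unfolding sin_exp_eq cos_exp_eq e_def[symmetric] em ..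
  also have "\<dots> = (e^2 - 1) / (\<i> * (e^2 + 1))"
  proof -
    have "e - inverse e = (e^2 - 1)/e" "e + inverse e = (e^2 + 1)/e"
      using e0 by (simp_all add: field_simps power2_eq_square)
    then show ?thesis using e0 a by (simp add: div_i)
  qed
  also have "\<dots> = -\<i> * (e^2 - 1) / (e^2 + 1)"
    by (rule div_i)
  finally show ?thesis unfolding tan_def exp2 e_def[symmetric] .
qed

lemma cot_exp:
  fixes u :: complex
  assumes "exp (2 * \<i> * u) \<noteq> 1"
  shows "cot u = \<i> * (exp (2 * \<i> * u) + 1) / (exp (2 * \<i> * u) - 1)"
proof -
  define e where "e = exp (\<i> * u)"
  have e0: "e \<noteq> 0" unfolding e_def by simp
  have em: "exp (-(\<i> * u)) = inverse e" unfolding e_def by (simp add: exp_minus)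
  have a: "e^2 - 1 \<noteq> 0" using assms unfolding exp2 e_def by simp
  have "cos u / sin u = ((e + inverse e) / 2) / ((e - inverse e) / (2*\<i>))"
    unfolding sin_exp_eq cos_exp_eq e_def[symmetric] em ..
  also have "\<dots> = \<i> * (e^2 + 1) / (e^2 - 1)"
  proof -
    have "e - inverse e = (e^2 - 1)/e" "e + inverse e = (e^2 + 1)/e"
      using e0 by (simp_all add: field_simps power2_eq_square)
    then show ?thesis using e0 a by (simp add: div_i)
  qed
  finally show ?thesis unfolding cot_def exp2 e_def[symmetric] .
qed

lemma exp_Arctan:
  fixes z :: complex
  assumes "1 - \<i>*z \<noteq> 0" "1 + \<i>*z \<noteq> 0"
  shows "exp (2 * \<i> * (of_nat n * Arctan z)) = ((1 + \<i>*z)/(1 - \<i>*z))^n"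
proof -
  have q: "(1 - \<i>*z)/(1 + \<i>*z) \<noteq> 0" using assms by simp
  have "2 * \<i> * Arctan z = - Ln ((1 - \<i>*z)/(1 + \<i>*z))"
    unfolding Arctan_def by simp
  then have "exp (2 * \<i> * Arctan z) = inverse ((1 - \<i>*z)/(1 + \<i>*z))"
    using q by (simp add: exp_minus)
  also have "\<dots> = (1 + \<i>*z)/(1 - \<i>*z)" by simp
  finally have e: "exp (2 * \<i> * Arctan z) = (1 + \<i>*z)/(1 - \<i>*z)" .
  have "exp (2 * \<i> * (of_nat n * Arctan z)) = exp (of_nat n * (2 * \<i> * Arctan z))"
    by (simp add: algebra_simps)
  also have "\<dots> = exp (2 * \<i> * Arctan z) ^ n" by (rule exp_of_nat_mult)
  finally show ?thesis using e by simp
qed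

lemma id0: "((\<lambda>z::complex. z) \<longlongrightarrow> 0) (nhds 0)"
  by (rule filterlim_ident)

lemma ev_to_ball:
  assumes "eventually P (nhds (0::complex))"
  shows "\<exists>r>0. \<forall>z. norm z < r \<longrightarrow> P z"
  using assms unfolding eventually_nhds_metric by (simp add: dist_norm)

lemma ev_A:
  assumes "c \<noteq> 1"
  shows "eventually (\<lambda>z::complex. 1 - \<i>*z \<noteq> 0 \<and> 1 + \<i>*z \<noteq> 0 \<and> ((1 + \<i>*z)/(1 - \<i>*z))^n \<noteq> c) (nhds 0)"
proof -
  have t1: "((\<lambda>z::complex. 1 - \<i>*z) \<longlongrightarrow> 1 - \<i>*0) (nhds 0)"
    by (intro tendsto_intros id0)
  have t2: "((\<lambda>z::complex. 1 + \<i>*z) \<longlongrightarrow> 1 + \<i>*0) (nhds 0)"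
    by (intro tendsto_intros id0)
  have t3: "((\<lambda>z::complex. ((1 + \<i>*z)/(1 - \<i>*z))^n) \<longlongrightarrow> ((1 + \<i>*0)/(1 - \<i>*0))^n) (nhds 0)"
    by (intro tendsto_intros id0) simp
  have e1: "eventually (\<lambda>z::complex. 1 - \<i>*z \<noteq> 0) (nhds 0)"
    using tendsto_imp_eventually_ne[OF t1, of 0] by simp
  have e2: "eventually (\<lambda>z::complex. 1 + \<i>*z \<noteq> 0) (nhds 0)"
    using tendsto_imp_eventually_ne[OF t2, of 0] by simp
  have e3: "eventually (\<lambda>z::complex. ((1 + \<i>*z)/(1 - \<i>*z))^n \<noteq> c) (nhds 0)"
    using tendsto_imp_eventually_ne[OF t3, of c] assms by simp
  show ?thesis using eventually_conj[OF e1 eventually_conj[OF e2 e3]] .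
qed

lemma ev_norm:
  fixes lam :: "nat \<Rightarrow> complex"
  shows "eventually (\<lambda>z::complex. \<forall>k<n. norm (lam k * z) < 1) (nhds 0)"
proof -
  have "eventually (\<lambda>z::complex. norm (lam k * z) < 1) (nhds 0)" for k
  proof -
    have "((\<lambda>z::complex. norm (lam k * z)) \<longlongrightarrow> norm (lam k * 0)) (nhds 0)"
      by (intro tendsto_intros id0)
    then show ?thesis by (rule order_tendstoD) simp
  qed
  then have "eventually (\<lambda>z::complex. \<forall>k\<in>{..<n}. norm (lam k * z) < 1) (nhds 0)"
    by (intro eventually_ball_finite) auto
  then show ?thesis by (rule eventually_mono) auto
qed

lemma part1:
  fixes n :: nat and \<alpha> :: real
  assumes n: "n \<ge> 1" and a: "\<forall>j::int. \<alpha> \<noteq> real_of_int j * pi"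
  shows "\<exists>r>0. \<forall>z::complex. norm z < r \<longrightarrow>
            (\<lambda>m. complex_of_real (F_coeff n \<alpha> m) * z ^ m) sums
            (of_nat n / (1 + z\<^sup>2) * (1 - z * cot (of_nat n * Arctan z - complex_of_real \<alpha>)))"
proof -
  define \<sigma> where "\<sigma> = exp (2 * \<i> * complex_of_real \<alpha>)"
  define E0 where "E0 = exp (2 * \<i> * complex_of_real \<alpha> / of_nat n)"
  define \<zeta> where "\<zeta> = zeta n"
  define c where "c k = \<i> * (E0 * \<zeta>^k + 1) / (E0 * \<zeta>^k - 1)" for k
  have \<zeta>n: "\<zeta>^n = 1" using zeta_pow_n n \<zeta>_def by simp
  have \<zeta>1: "\<forall>j. 0<j \<and> j<n \<longrightarrow> \<zeta>^j \<noteq> 1" using zeta_ne1 \<zeta>_def by auto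
  have \<sigma>1: "\<sigma> \<noteq> 1"
  proof
    assume "\<sigma> = 1"
    then obtain m :: int where "Im (2 * \<i> * complex_of_real \<alpha>) = of_int (2*m) * pi"
      unfolding \<sigma>_def exp_eq_1 by blast
    then have "\<alpha> = real_of_int m * pi" by simp
    with a show False by blast
  qed
  have \<sigma>0: "\<sigma> \<noteq> 0" unfolding \<sigma>_def by simp
  have E0n: "E0^n = \<sigma>"
    unfolding E0_def \<sigma>_def using n by (simp add: exp_of_nat_mult[symmetric])
  have Epow: "(E0*\<zeta>^k)^n = \<sigma>" for k
  proof -
    have "(\<zeta>^k)^n = 1" using \<zeta>n by (subst pow_swap) simp
    then show ?thesis using E0n by (simp add: power_mult_distrib)
  qed
  have Ek: "exp (2 * \<i> * complex_of_real ((\<alpha> + real k * pi) / real n)) = E0 * \<zeta>^k" for k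
  proof -
    have "2 * \<i> * complex_of_real ((\<alpha> + real k * pi) / real n)
        = 2 * \<i> * complex_of_real \<alpha> / of_nat n + of_nat k * (2 * pi * \<i> / of_nat n)"
      by (simp add: field_simps add_divide_distrib)
    then show ?thesis unfolding E0_def \<zeta>_def zeta_pow by (simp add: exp_add)
  qed
  have cotk: "complex_of_real (cot ((\<alpha> + real k * pi) / real n)) = c k" for k
  proof -
    have "E0 * \<zeta>^k \<noteq> 1" using Epow[of k] \<sigma>1 by auto
    then have ne: "exp (2 * \<i> * complex_of_real ((\<alpha> + real k * pi) / real n)) \<noteq> 1" by (simp only: Ek) simp
    show ?thesis unfolding cot_of_real c_def cot_exp[OF ne] by (simp only: Ek)
  qed
  have coef: "complex_of_real (F_coeff n \<alpha> m) = (\<Sum>k<n. c k ^ m)" for m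
    unfolding F_coeff_def by (simp add: cotk[symmetric])
  have ev: "eventually (\<lambda>z::complex. (\<forall>k<n. norm (c k * z) < 1) \<and>
     (1 - \<i>*z \<noteq> 0 \<and> 1 + \<i>*z \<noteq> 0 \<and> ((1 + \<i>*z)/(1 - \<i>*z))^n \<noteq> \<sigma>)) (nhds 0)"
    by (rule eventually_conj[OF ev_norm ev_A[OF \<sigma>1]])
  have "eventually (\<lambda>z::complex. (\<lambda>m. complex_of_real (F_coeff n \<alpha> m) * z ^ m) sums
            (of_nat n / (1 + z\<^sup>2) * (1 - z * cot (of_nat n * Arctan z - complex_of_real \<alpha>)))) (nhds 0)"
    using ev
  proof (rule eventually_mono, elim conjE)
    fix z :: complex
    assume nrm: "\<forall>k<n. norm (c k * z) < 1" and z1: "1 - \<i>*z \<noteq> 0" and z2: "1 + \<i>*z \<noteq> 0"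
      and zA: "((1 + \<i>*z)/(1 - \<i>*z))^n \<noteq> \<sigma>"
    define A where "A = ((1 + \<i>*z)/(1 - \<i>*z))^n"
    have S: "(\<lambda>m. complex_of_real (F_coeff n \<alpha> m) * z ^ m) sums (\<Sum>k<n. 1 / (1 - z * c k))"
      unfolding coef by (rule sums_eig[OF nrm])
    have CS: "(\<Sum>k<n. 1 / (1 - z * c k)) = of_nat n / (1 + z^2) * (1 - \<i>*z*(A + \<sigma>)/(A - \<sigma>))"
      unfolding c_def A_def by (rule cot_sum[OF \<zeta>n \<zeta>1 n E0n \<sigma>1 z1 z2 zA])
    have ex: "exp (2 * \<i> * (of_nat n * Arctan z - complex_of_real \<alpha>)) = A / \<sigma>"
    proof -
      have "2 * \<i> * (of_nat n * Arctan z - complex_of_real \<alpha>) = 2 * \<i> * (of_nat n * Arctan z) - 2 * \<i> * complex_of_real \<alpha>"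
        by (simp add: algebra_simps)
      then show ?thesis unfolding A_def \<sigma>_def using exp_Arctan[OF z1 z2, of n] by (simp add: exp_diff)
    qed
    have As: "A / \<sigma> \<noteq> 1" using zA \<sigma>0 A_def by auto
    have ct: "cot (of_nat n * Arctan z - complex_of_real \<alpha>) = \<i> * (A + \<sigma>) / (A - \<sigma>)"
    proof -
      have "cot (of_nat n * Arctan z - complex_of_real \<alpha>) = \<i> * (A / \<sigma> + 1) / (A / \<sigma> - 1)"
        using cot_exp[of "of_nat n * Arctan z - complex_of_real \<alpha>"] ex As by simp
      also have "\<dots> = \<i> * (A + \<sigma>) / (A - \<sigma>)"
      proof -
        have "A - \<sigma> \<noteq> 0" using zA A_def by simp
        then show ?thesis using \<sigma>0 by (simp add: field_simps)
      qed
      finally show ?thesis .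
    qed
    show "(\<lambda>m. complex_of_real (F_coeff n \<alpha> m) * z ^ m) sums
            (of_nat n / (1 + z\<^sup>2) * (1 - z * cot (of_nat n * Arctan z - complex_of_real \<alpha>)))"
      using S unfolding CS ct by (simp add: mult.assoc mult.left_commute)
  qed
  then show ?thesis by (rule ev_to_ball)
qed

lemma tanA:
  fixes z :: complex
  assumes z1: "1 - \<i>*z \<noteq> 0" and z2: "1 + \<i>*z \<noteq> 0" and A1: "((1 + \<i>*z)/(1 - \<i>*z))^n \<noteq> -1"
  shows "tan (of_nat n * Arctan z) = -\<i> * (((1 + \<i>*z)/(1 - \<i>*z))^n - 1) / (((1 + \<i>*z)/(1 - \<i>*z))^n + 1)"
proof -
  have "exp (2 * \<i> * (of_nat n * Arctan z)) + 1 \<noteq> 0"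
    unfolding exp_Arctan[OF z1 z2, of n] using A1 by (simp add: eq_neg_iff_add_eq_0[symmetric])
  then show ?thesis using tan_exp exp_Arctan[OF z1 z2, of n] by simp
qed

lemma z2fac: "1 + (z::complex)^2 = (1 - \<i>*z) * (1 + \<i>*z)"
  by (simp add: algebra_simps power2_eq_square)

lemma part2_i:
  fixes n :: nat
  shows "\<exists>r>0. \<forall>z::complex. norm z < r \<longrightarrow>
            (\<lambda>m. moment_coeff (\<i> \<cdot>\<^sub>m J_mat n + B_mat n) m * z ^ m) sums
            (of_nat n / (1 + z\<^sup>2) *
              (1 + z * (\<i> + tan (of_nat n * Arctan z)) / (1 - \<i> * tan (of_nat n * Arctan z))))"
proof -
  have eA: "eventually (\<lambda>z::complex. 1 - \<i>*z \<noteq> 0 \<and> 1 + \<i>*z \<noteq> 0 \<and> ((1 + \<i>*z)/(1 - \<i>*z))^n \<noteq> -1) (nhds 0)"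
    by (rule ev_A) simp
  have ev: "eventually (\<lambda>z::complex. norm (\<i> * z) < 1 \<and>
     (1 - \<i>*z \<noteq> 0 \<and> 1 + \<i>*z \<noteq> 0 \<and> ((1 + \<i>*z)/(1 - \<i>*z))^n \<noteq> -1)) (nhds 0)"
    using eventually_conj[OF ev_norm[of 1 "\<lambda>_. \<i>"] eA] by simp
  have "eventually (\<lambda>z::complex. (\<lambda>m. moment_coeff (\<i> \<cdot>\<^sub>m J_mat n + B_mat n) m * z ^ m) sums
            (of_nat n / (1 + z\<^sup>2) *
              (1 + z * (\<i> + tan (of_nat n * Arctan z)) / (1 - \<i> * tan (of_nat n * Arctan z))))) (nhds 0)"
    using ev
  proof (rule eventually_mono, elim conjE)
    fix z :: complex
    assume nz: "norm (\<i> * z) < 1" and z1: "1 - \<i>*z \<noteq> 0" and z2: "1 + \<i>*z \<noteq> 0"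
      and A1: "((1 + \<i>*z)/(1 - \<i>*z))^n \<noteq> -1"
    define A where "A = ((1 + \<i>*z)/(1 - \<i>*z))^n"
    have A1': "A + 1 \<noteq> 0" using A1 A_def by (simp add: eq_neg_iff_add_eq_0[symmetric])
    have T: "tan (of_nat n * Arctan z) = -\<i> * (A - 1) / (A + 1)" unfolding A_def by (rule tanA[OF z1 z2 A1])
    have q: "(\<i> + tan (of_nat n * Arctan z)) / (1 - \<i> * tan (of_nat n * Arctan z)) = \<i>"
    proof -
      have a: "\<i> + -\<i> * (A - 1) / (A + 1) = 2 * \<i> / (A + 1)" using A1' by (simp add: field_simps)
      have b: "1 - \<i> * (-\<i> * (A - 1) / (A + 1)) = 2 / (A + 1)" using A1' by (simp add: field_simps)
      show ?thesis unfolding T a b using A1' by simp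
    qed
    have S: "(\<lambda>m. of_nat n * (\<i> * z)^m) sums (of_nat n * (1 / (1 - \<i> * z)))"
      by (rule sums_mult) (use geometric_sums[OF nz] in simp)
    have R: "of_nat n / (1 + z\<^sup>2) * (1 + z * (\<i> + tan (of_nat n * Arctan z)) / (1 - \<i> * tan (of_nat n * Arctan z)))
       = of_nat n * (1 / (1 - \<i> * z))"
    proof -
      have "z * (\<i> + tan (of_nat n * Arctan z)) / (1 - \<i> * tan (of_nat n * Arctan z)) = z * \<i>"
        using q by (metis times_divide_eq_right)
      then have "of_nat n / (1 + z\<^sup>2) * (1 + z * (\<i> + tan (of_nat n * Arctan z)) / (1 - \<i> * tan (of_nat n * Arctan z)))
          = of_nat n / ((1 - \<i>*z) * (1 + \<i>*z)) * (1 + \<i>*z)" unfolding z2fac by (simp add: mult.commute)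
      also have "\<dots> = of_nat n * (1 / (1 - \<i> * z))" using z2 by simp
      finally show ?thesis .
    qed
    show "(\<lambda>m. moment_coeff (\<i> \<cdot>\<^sub>m J_mat n + B_mat n) m * z ^ m) sums
            (of_nat n / (1 + z\<^sup>2) *
              (1 + z * (\<i> + tan (of_nat n * Arctan z)) / (1 - \<i> * tan (of_nat n * Arctan z))))"
      unfolding R moment_i using S by (simp add: power_mult_distrib mult.assoc)
  qed
  then show ?thesis by (rule ev_to_ball)
qed

lemma part2_mi:
  fixes n :: nat
  shows "\<exists>r>0. \<forall>z::complex. norm z < r \<longrightarrow>
            (\<lambda>m. moment_coeff ((-\<i>) \<cdot>\<^sub>m J_mat n + B_mat n) m * z ^ m) sums
            (of_nat n / (1 + z\<^sup>2) *
              (1 + z * ((-\<i>) + tan (of_nat n * Arctan z)) / (1 - (-\<i>) * tan (of_nat n * Arctan z))))"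
proof -
  have eA: "eventually (\<lambda>z::complex. 1 - \<i>*z \<noteq> 0 \<and> 1 + \<i>*z \<noteq> 0 \<and> ((1 + \<i>*z)/(1 - \<i>*z))^n \<noteq> -1) (nhds 0)"
    by (rule ev_A) simp
  have ev: "eventually (\<lambda>z::complex. norm (-\<i> * z) < 1 \<and>
     (1 - \<i>*z \<noteq> 0 \<and> 1 + \<i>*z \<noteq> 0 \<and> ((1 + \<i>*z)/(1 - \<i>*z))^n \<noteq> -1)) (nhds 0)"
    using eventually_conj[OF ev_norm[of 1 "\<lambda>_. -\<i>"] eA] by simp
  have "eventually (\<lambda>z::complex. (\<lambda>m. moment_coeff ((-\<i>) \<cdot>\<^sub>m J_mat n + B_mat n) m * z ^ m) sums
            (of_nat n / (1 + z\<^sup>2) *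
              (1 + z * ((-\<i>) + tan (of_nat n * Arctan z)) / (1 - (-\<i>) * tan (of_nat n * Arctan z))))) (nhds 0)"
    using ev
  proof (rule eventually_mono, elim conjE)
    fix z :: complex
    assume nz: "norm (-\<i> * z) < 1" and z1: "1 - \<i>*z \<noteq> 0" and z2: "1 + \<i>*z \<noteq> 0"
      and A1: "((1 + \<i>*z)/(1 - \<i>*z))^n \<noteq> -1"
    define A where "A = ((1 + \<i>*z)/(1 - \<i>*z))^n"
    have A1': "A + 1 \<noteq> 0" using A1 A_def by (simp add: eq_neg_iff_add_eq_0[symmetric])
    have A0: "A \<noteq> 0" using z1 z2 A_def by simp
    have T: "tan (of_nat n * Arctan z) = -\<i> * (A - 1) / (A + 1)" unfolding A_def by (rule tanA[OF z1 z2 A1])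
    have q: "((-\<i>) + tan (of_nat n * Arctan z)) / (1 - (-\<i>) * tan (of_nat n * Arctan z)) = -\<i>"
    proof -
      have a: "(-\<i>) + -\<i> * (A - 1) / (A + 1) = -2 * \<i> * A / (A + 1)" using A1' by (simp add: field_simps)
      have b: "1 - (-\<i>) * (-\<i> * (A - 1) / (A + 1)) = 2 * A / (A + 1)" using A1' by (simp add: field_simps)
      show ?thesis unfolding T a b using A1' A0 by simp
    qed
    have S: "(\<lambda>m. of_nat n * (-\<i> * z)^m) sums (of_nat n * (1 / (1 - (-\<i> * z))))"
      by (rule sums_mult) (use geometric_sums[OF nz] in simp)
    have R: "of_nat n / (1 + z\<^sup>2) * (1 + z * ((-\<i>) + tan (of_nat n * Arctan z)) / (1 - (-\<i>) * tan (of_nat n * Arctan z)))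
       = of_nat n * (1 / (1 - (-\<i> * z)))"
    proof -
      have "z * ((-\<i>) + tan (of_nat n * Arctan z)) / (1 - (-\<i>) * tan (of_nat n * Arctan z)) = z * (-\<i>)"
        using q by (metis times_divide_eq_right)
      then have "of_nat n / (1 + z\<^sup>2) * (1 + z * ((-\<i>) + tan (of_nat n * Arctan z)) / (1 - (-\<i>) * tan (of_nat n * Arctan z)))
          = of_nat n / ((1 - \<i>*z) * (1 + \<i>*z)) * (1 - \<i>*z)" unfolding z2fac by (simp add: mult.commute)
      also have "\<dots> = of_nat n * (1 / (1 - (-\<i> * z)))" using z1 by simp
      finally show ?thesis .
    qed
    show "(\<lambda>m. moment_coeff ((-\<i>) \<cdot>\<^sub>m J_mat n + B_mat n) m * z ^ m) sums
            (of_nat n / (1 + z\<^sup>2) *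
              (1 + z * ((-\<i>) + tan (of_nat n * Arctan z)) / (1 - (-\<i>) * tan (of_nat n * Arctan z))))"
      unfolding R moment_mi mult.assoc power_mult_distrib[symmetric] using S .
  qed
  then show ?thesis by (rule ev_to_ball)
qed

lemma part2_gen:
  fixes n :: nat and x :: complex
  assumes n: "n \<ge> 1" and xi: "x \<noteq> \<i>" "x \<noteq> -\<i>"
  shows "\<exists>r>0. \<forall>z::complex. norm z < r \<longrightarrow>
            (\<lambda>m. moment_coeff (x \<cdot>\<^sub>m J_mat n + B_mat n) m * z ^ m) sums
            (of_nat n / (1 + z\<^sup>2) *
              (1 + z * (x + tan (of_nat n * Arctan z)) / (1 - x * tan (of_nat n * Arctan z))))"
proof -
  define \<sigma> where "\<sigma> = (x + \<i>)/(x - \<i>)"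
  have xp: "x + \<i> \<noteq> 0" "x - \<i> \<noteq> 0" using xi by (auto simp: add_eq_0_iff) (metis minus_minus)
  have \<sigma>0: "\<sigma> \<noteq> 0" using xp \<sigma>_def by simp
  have \<sigma>1: "\<sigma> \<noteq> 1" using xp \<sigma>_def by simp
  define E0 where "E0 = exp (Ln \<sigma> / of_nat n)"
  have E0n: "E0^n = \<sigma>"
  proof -
    have "E0^n = exp (of_nat n * (Ln \<sigma> / of_nat n))" unfolding E0_def by (rule exp_of_nat_mult[symmetric])
    also have "of_nat n * (Ln \<sigma> / of_nat n) = Ln \<sigma>" using n by simp
    finally show ?thesis using \<sigma>0 by simp
  qed
  define \<zeta> where "\<zeta> = zeta n"
  define c where "c k = \<i> * (E0 * \<zeta>^k + 1) / (E0 * \<zeta>^k - 1)" for k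
  have \<zeta>n: "\<zeta>^n = 1" using zeta_pow_n n \<zeta>_def by simp
  have \<zeta>1: "\<forall>j. 0<j \<and> j<n \<longrightarrow> \<zeta>^j \<noteq> 1" using zeta_ne1 \<zeta>_def by auto
  have coef: "moment_coeff (x \<cdot>\<^sub>m J_mat n + B_mat n) m = (\<Sum>k<n. c k ^ m)" for m
    unfolding c_def \<zeta>_def by (rule moment_eig[OF n xi E0n[unfolded \<sigma>_def]])
  have eA: "eventually (\<lambda>z::complex. 1 - \<i>*z \<noteq> 0 \<and> 1 + \<i>*z \<noteq> 0 \<and> ((1 + \<i>*z)/(1 - \<i>*z))^n \<noteq> -1) (nhds 0)"
    by (rule ev_A) simp
  have ev: "eventually (\<lambda>z::complex. (\<forall>k<n. norm (c k * z) < 1) \<and>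
     ((1 - \<i>*z \<noteq> 0 \<and> 1 + \<i>*z \<noteq> 0 \<and> ((1 + \<i>*z)/(1 - \<i>*z))^n \<noteq> \<sigma>) \<and>
      (1 - \<i>*z \<noteq> 0 \<and> 1 + \<i>*z \<noteq> 0 \<and> ((1 + \<i>*z)/(1 - \<i>*z))^n \<noteq> -1))) (nhds 0)"
    by (rule eventually_conj[OF ev_norm eventually_conj[OF ev_A[OF \<sigma>1] eA]])
  have "eventually (\<lambda>z::complex. (\<lambda>m. moment_coeff (x \<cdot>\<^sub>m J_mat n + B_mat n) m * z ^ m) sums
            (of_nat n / (1 + z\<^sup>2) *
              (1 + z * (x + tan (of_nat n * Arctan z)) / (1 - x * tan (of_nat n * Arctan z))))) (nhds 0)"
    using ev
  proof (rule eventually_mono, elim conjE)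
    fix z :: complex
    assume nrm: "\<forall>k<n. norm (c k * z) < 1" and z1: "1 - \<i>*z \<noteq> 0" and z2: "1 + \<i>*z \<noteq> 0"
      and zA: "((1 + \<i>*z)/(1 - \<i>*z))^n \<noteq> \<sigma>" and A1: "((1 + \<i>*z)/(1 - \<i>*z))^n \<noteq> -1"
    define A where "A = ((1 + \<i>*z)/(1 - \<i>*z))^n"
    have A1': "A + 1 \<noteq> 0" using A1 A_def by (simp add: eq_neg_iff_add_eq_0[symmetric])
    have As: "A - \<sigma> \<noteq> 0" using zA A_def by simp
    have S: "(\<lambda>m. moment_coeff (x \<cdot>\<^sub>m J_mat n + B_mat n) m * z ^ m) sums (\<Sum>k<n. 1 / (1 - z * c k))"
      unfolding coef by (rule sums_eig[OF nrm])
    have CS: "(\<Sum>k<n. 1 / (1 - z * c k)) = of_nat n / (1 + z^2) * (1 - \<i>*z*(A + \<sigma>)/(A - \<sigma>))"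
      unfolding c_def A_def by (rule cot_sum[OF \<zeta>n \<zeta>1 n E0n \<sigma>1 z1 z2 zA])
    have T: "tan (of_nat n * Arctan z) = -\<i> * (A - 1) / (A + 1)" unfolding A_def by (rule tanA[OF z1 z2 A1])
    have h: "(x - \<i>) * \<sigma> = x + \<i>" unfolding \<sigma>_def using xp by simp
    have e1: "(x - \<i>) * (A + \<sigma>) = (x - \<i>) * A + (x + \<i>)"
      by (simp only: distrib_left h)
    have e2: "\<i> * (x - \<i>) * (A - \<sigma>) = \<i> * ((x - \<i>) * A - (x + \<i>))"
    proof -
      have "(x - \<i>) * (A - \<sigma>) = (x - \<i>) * A - (x + \<i>)" by (simp only: right_diff_distrib h)
      then show ?thesis by (simp only: mult.assoc)
    qed
    have N: "x + -\<i> * (A - 1) / (A + 1) = (x - \<i>) * (A + \<sigma>) / (A + 1)"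
      unfolding e1 using A1' by (simp add: field_simps)
    have D: "1 - x * (-\<i> * (A - 1) / (A + 1)) = \<i> * (x - \<i>) * (A - \<sigma>) / (A + 1)"
      unfolding e2 using A1' by (simp add: field_simps)
    have q: "z * (x + tan (of_nat n * Arctan z)) / (1 - x * tan (of_nat n * Arctan z)) = - (\<i>*z*(A + \<sigma>)/(A - \<sigma>))"
      unfolding T N D using A1' xp As by (intro div_gen) auto
    show "(\<lambda>m. moment_coeff (x \<cdot>\<^sub>m J_mat n + B_mat n) m * z ^ m) sums
            (of_nat n / (1 + z\<^sup>2) *
              (1 + z * (x + tan (of_nat n * Arctan z)) / (1 - x * tan (of_nat n * Arctan z))))"
      using S unfolding CS q by simp
  qed
  then show ?thesis by (rule ev_to_ball)
qed

theorem proposition4p1: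
  fixes n :: nat and \<alpha> :: real and x :: complex
  assumes "n \<ge> 2" and "\<forall>j::int. \<alpha> \<noteq> real_of_int j * pi"
  shows "(\<exists>r>0. \<forall>z::complex. norm z < r \<longrightarrow>
            (\<lambda>m. complex_of_real (F_coeff n \<alpha> m) * z ^ m) sums
            (of_nat n / (1 + z\<^sup>2) * (1 - z * cot (of_nat n * Arctan z - complex_of_real \<alpha>))))
       \<and> (\<exists>r>0. \<forall>z::complex. norm z < r \<longrightarrow>
            (\<lambda>m. moment_coeff (x \<cdot>\<^sub>m J_mat n + B_mat n) m * z ^ m) sums
            (of_nat n / (1 + z\<^sup>2) *
              (1 + z * (x + tan (of_nat n * Arctan z)) / (1 - x * tan (of_nat n * Arctan z)))))"
proof
  have n1: "n \<ge> 1" using assms(1) by simp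
  show "\<exists>r>0. \<forall>z::complex. norm z < r \<longrightarrow>
            (\<lambda>m. complex_of_real (F_coeff n \<alpha> m) * z ^ m) sums
            (of_nat n / (1 + z\<^sup>2) * (1 - z * cot (of_nat n * Arctan z - complex_of_real \<alpha>)))"
    by (rule part1[OF n1 assms(2)])
  show "\<exists>r>0. \<forall>z::complex. norm z < r \<longrightarrow>
            (\<lambda>m. moment_coeff (x \<cdot>\<^sub>m J_mat n + B_mat n) m * z ^ m) sums
            (of_nat n / (1 + z\<^sup>2) *
              (1 + z * (x + tan (of_nat n * Arctan z)) / (1 - x * tan (of_nat n * Arctan z))))"
  proof (cases "x = \<i>")
    case True
    show ?thesis unfolding True by (rule part2_i)
  next
    case False
    show ?thesis
    proof (cases "x = -\<i>")
      case True
      show ?thesis unfolding True by (rule part2_mi)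
    next
      case F2: False
      show ?thesis by (rule part2_gen[OF n1 False F2])
    qed
  qed
qed

end
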